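(* Let $X$ be a pure $d$-dimensional simplicial complex, $1\le k\le d-1$, and $c\in X(k-1)$. Then the link $X_c$ is isomorphic to $R_c(X)$.
   Context: $X(j)$ = faces with $j+1$ elements; $X_c=\{\tau\setminus c:c\subseteq\tau\in X\}$. The representation complex $R_k(X)$ has vertex set $X(k)$ and, for $1\le i\le d-k$, $i$-faces the sets $S$ of $i+1$ distinct elements of $X(k)$ with $\bigcup S\in X(i+k)$ and $|\bigcap S|=k$; the core of such $S$ is $\bigcap S$. $R_c(X)$ is the complex consisting of $\emptyset$, the vertices $\{\tau\}$ with $\tau\in X(k)$, $c\subseteq\tau$, and all faces of $R_k(X)$ of dimension $\ge1$ whose core is $c$. Two complexes are isomorphic if there is a bijection between their faces preserving inclusion in both directions. *)

theory Defs
  imports Main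
begin

definition simplicial_complex :: "'a set set \<Rightarrow> bool" where
  "simplicial_complex X \<longleftrightarrow> finite X \<and> X \<noteq> {} \<and> (\<forall>\<sigma>\<in>X. finite \<sigma>) \<and>
     (\<forall>\<sigma>\<in>X. \<forall>\<tau>. \<tau> \<subseteq> \<sigma> \<longrightarrow> \<tau> \<in> X)"

definition faces_of_dim :: "'a set set \<Rightarrow> nat \<Rightarrow> 'a set set" where
  "faces_of_dim X j = {\<sigma>\<in>X. card \<sigma> = j + 1}"

definition pure_complex :: "'a set set \<Rightarrow> nat \<Rightarrow> bool" where
  "pure_complex X d \<longleftrightarrow> simplicial_complex X \<and>
     (\<forall>\<sigma>\<in>X. card \<sigma> \<le> d + 1 \<and> (\<exists>\<tau>\<in>X. \<sigma> \<subseteq> \<tau> \<and> card \<tau> = d + 1))"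

definition link :: "'a set set \<Rightarrow> 'a set \<Rightarrow> 'a set set" where
  "link X c = {\<tau> - c | \<tau>. \<tau> \<in> X \<and> c \<subseteq> \<tau>}"

text \<open>The i-faces of the representation complex R_k(X), for 1 \<le> i \<le> d-k.\<close>
definition rep_faces :: "'a set set \<Rightarrow> nat \<Rightarrow> nat \<Rightarrow> nat \<Rightarrow> 'a set set set" where
  "rep_faces X d k i = {S. S \<subseteq> faces_of_dim X k \<and> card S = i + 1 \<and>
       \<Union>S \<in> faces_of_dim X (i + k) \<and> card (\<Inter>S) = k}"

definition rep_complex_c :: "'a set set \<Rightarrow> nat \<Rightarrow> nat \<Rightarrow> 'a set \<Rightarrow> 'a set set set" where
  "rep_complex_c X d k c =
     {{}} \<union> {{\<tau>} | \<tau>. \<tau> \<in> faces_of_dim X k \<and> c \<subseteq> \<tau>}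
     \<union> {S. \<exists>i. 1 \<le> i \<and> i \<le> d - k \<and> S \<in> rep_faces X d k i \<and> \<Inter>S = c}"

definition complex_iso :: "'a set set \<Rightarrow> 'b set set \<Rightarrow> bool" where
  "complex_iso K L \<longleftrightarrow> (\<exists>f. bij_betw f K L \<and> (\<forall>A\<in>K. \<forall>B\<in>K. A \<subseteq> B \<longleftrightarrow> f A \<subseteq> f B))"

end

theory Submission
  imports Defs
begin

lemma link_mem:
  assumes "c \<in> X"
  shows "\<sigma> \<in> link X c \<longleftrightarrow> \<sigma> \<inter> c = {} \<and> \<sigma> \<union> c \<in> X"
proof
  assume "\<sigma> \<in> link X c"
  then obtain \<tau> where "\<sigma> = \<tau> - c" "\<tau> \<in> X" "c \<subseteq> \<tau>" unfolding link_def by blast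
  moreover have "\<sigma> \<union> c = \<tau>" using calculation by blast
  ultimately show "\<sigma> \<inter> c = {} \<and> \<sigma> \<union> c \<in> X" by auto
next
  assume "\<sigma> \<inter> c = {} \<and> \<sigma> \<union> c \<in> X"
  then show "\<sigma> \<in> link X c" unfolding link_def
    by (intro CollectI exI[of _ "\<sigma> \<union> c"]) blast
qed

lemma img_sub:
  assumes "A \<inter> c = {}" "B \<inter> c = {}"
  shows "(\<lambda>v. insert v c) ` A \<subseteq> (\<lambda>v. insert v c) ` B \<longleftrightarrow> A \<subseteq> B"
proof
  assume h: "(\<lambda>v. insert v c) ` A \<subseteq> (\<lambda>v. insert v c) ` B"
  show "A \<subseteq> B"
  proof
    fix v assume "v \<in> A"
    then obtain w where "w \<in> B" "insert v c = insert w c" using h by blast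
    moreover have "v \<notin> c" "w \<notin> c" using assms \<open>v \<in> A\<close> \<open>w \<in> B\<close> by auto
    ultimately show "v \<in> B" by (metis insertCI insertE)
  qed
qed blast

lemma inj_ins:
  assumes "A \<inter> c = {}"
  shows "inj_on (\<lambda>v. insert v c) A"
  using assms unfolding inj_on_def by (metis disjoint_iff insertCI insertE)

theorem mainTheorem14:
  fixes X :: "'a set set" and d k :: nat and c :: "'a set"
  assumes "pure_complex X d"
    and "1 \<le> k" and "k \<le> d - 1"
    and "c \<in> faces_of_dim X (k - 1)"
  shows "complex_iso (link X c) (rep_complex_c X d k c)"
proof -
  have sc: "simplicial_complex X" and cardX: "\<And>\<sigma>. \<sigma> \<in> X \<Longrightarrow> card \<sigma> \<le> d + 1"
    using assms(1) unfolding pure_complex_def by auto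
  have finX: "\<And>\<sigma>. \<sigma> \<in> X \<Longrightarrow> finite \<sigma>" and downX: "\<And>\<sigma> \<tau>. \<sigma> \<in> X \<Longrightarrow> \<tau> \<subseteq> \<sigma> \<Longrightarrow> \<tau> \<in> X"
    using sc unfolding simplicial_complex_def by auto
  have cX: "c \<in> X" and cc: "card c = k" using assms(2,4) unfolding faces_of_dim_def by auto
  have fc: "finite c" using finX cX by blast
  define f where "f = (\<lambda>\<sigma>. (\<lambda>v. insert v c) ` \<sigma>)"
  have L: "\<sigma> \<in> link X c \<longleftrightarrow> \<sigma> \<inter> c = {} \<and> \<sigma> \<union> c \<in> X" for \<sigma>
    using link_mem[OF cX] .
  have mono: "A \<subseteq> B \<longleftrightarrow> f A \<subseteq> f B" if "A \<in> link X c" "B \<in> link X c" for A B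
  proof -
    have "A \<inter> c = {}" "B \<inter> c = {}" using that L by auto
    then show ?thesis unfolding f_def by (rule img_sub[symmetric])
  qed
  have inj: "inj_on f (link X c)"
    by (rule inj_onI) (metis mono subset_antisym order_refl)
  have into: "f \<sigma> \<in> rep_complex_c X d k c" if s: "\<sigma> \<in> link X c" for \<sigma>
  proof -
    have dis: "\<sigma> \<inter> c = {}" and uX: "\<sigma> \<union> c \<in> X" using s L by auto
    have fs: "finite \<sigma>" using finX[OF uX] by simp
    have cf: "card (f \<sigma>) = card \<sigma>" unfolding f_def using card_image[OF inj_ins[OF dis]] .
    have cu: "card (\<sigma> \<union> c) = card \<sigma> + k" using card_Un_disjoint[OF fs fc dis] cc by simp
    have elems: "insert v c \<in> faces_of_dim X k \<and> c \<subseteq> insert v c" if "v \<in> \<sigma>" for v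
    proof -
      have "insert v c \<in> X" using downX[OF uX] that by blast
      moreover have "v \<notin> c" using dis that by blast
      ultimately show ?thesis unfolding faces_of_dim_def using cc fc by auto
    qed
    show ?thesis
    proof (cases "card \<sigma> \<le> 1")
      case True
      then consider "\<sigma> = {}" | v where "\<sigma> = {v}" using fs
        by (metis card_0_eq card_1_singletonE le_eq_less_or_eq less_one)
      then show ?thesis
      proof cases
        case 1 then show ?thesis unfolding f_def rep_complex_c_def by simp
      next
        case 2
        then have "f \<sigma> = {insert v c}" unfolding f_def by simp
        then show ?thesis unfolding rep_complex_c_def using elems 2 by blast
      qed
    next
      case False
      define i where "i = card \<sigma> - 1"
      have i1: "1 \<le> i" "card \<sigma> = i + 1" using False unfolding i_def by auto
      have "i \<le> d - k" using cardX[OF uX] cu i1 by simp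
      have sne: "\<sigma> \<noteq> {}" using False by auto
      moreover have "\<Union>(f \<sigma>) = \<sigma> \<union> c"
        using sne unfolding f_def by blast
      moreover have "\<Inter>(f \<sigma>) = c"
      proof
        show "c \<subseteq> \<Inter>(f \<sigma>)" unfolding f_def by auto
        show "\<Inter>(f \<sigma>) \<subseteq> c"
        proof
          fix x assume x: "x \<in> \<Inter>(f \<sigma>)"
          obtain a b where ab: "a \<in> \<sigma>" "b \<in> \<sigma>" "a \<noteq> b"
            using False by (metis card_le_Suc0_iff_eq fs not_less_eq_eq One_nat_def)
          have "x \<in> insert a c" "x \<in> insert b c" using x ab unfolding f_def by auto
          then show "x \<in> c" using ab by auto
        qed
      qed
      moreover have "f \<sigma> \<subseteq> faces_of_dim X k" using elems unfolding f_def by auto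
      ultimately have "f \<sigma> \<in> rep_faces X d k i"
        unfolding rep_faces_def faces_of_dim_def using cf i1 uX cu cc by auto
      then show ?thesis unfolding rep_complex_c_def using i1 \<open>i \<le> d - k\<close> \<open>\<Inter>(f \<sigma>) = c\<close> by blast
    qed
  qed
  have onto: "S \<in> f ` link X c" if S: "S \<in> rep_complex_c X d k c" for S
  proof -
    consider "S = {}" | \<tau> where "S = {\<tau>}" "\<tau> \<in> faces_of_dim X k" "c \<subseteq> \<tau>"
      | i where "1 \<le> i" "S \<in> rep_faces X d k i" "\<Inter>S = c"
      using S unfolding rep_complex_c_def by blast
    then show ?thesis
    proof cases
      case 1
      have "{} \<in> link X c" using L cX by simp
      then show ?thesis using 1 unfolding f_def by blast
    next
      case 2
      have "card (\<tau> - c) = 1" using 2 cc fc unfolding faces_of_dim_def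
        by (simp add: card_Diff_subset)
      then obtain v where v: "\<tau> - c = {v}" by (meson card_1_singletonE)
      have "\<tau> = insert v c" using v 2 by blast
      moreover have "{v} \<in> link X c" using L v 2 \<open>\<tau> = insert v c\<close> unfolding faces_of_dim_def by auto
      ultimately show ?thesis using 2 unfolding f_def by (intro image_eqI[of _ _ "{v}"]) auto
    next
      case 3
      have Ssub: "S \<subseteq> faces_of_dim X k" and cS: "card S = i + 1" and US: "\<Union>S \<in> X"
        using 3 unfolding rep_faces_def faces_of_dim_def by auto
      have Sne: "S \<noteq> {}" using cS by auto
      have each: "\<exists>v. v \<notin> c \<and> \<tau> = insert v c" if "\<tau> \<in> S" for \<tau>
      proof -
        have t: "\<tau> \<in> X" "card \<tau> = k + 1" using Ssub that unfolding faces_of_dim_def by auto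
        have "c \<subseteq> \<tau>" using 3 that by blast
        then have "card (\<tau> - c) = 1" using t cc fc by (simp add: card_Diff_subset)
        then obtain v where v: "\<tau> - c = {v}" by (meson card_1_singletonE)
        then show ?thesis using \<open>c \<subseteq> \<tau>\<close> by blast
      qed
      define \<sigma> where "\<sigma> = \<Union>S - c"
      have "\<sigma> \<union> c = \<Union>S" using 3 Sne unfolding \<sigma>_def by blast
      then have sl: "\<sigma> \<in> link X c" using L US unfolding \<sigma>_def by auto
      have "f \<sigma> = S"
      proof
        show "f \<sigma> \<subseteq> S"
        proof
          fix x assume "x \<in> f \<sigma>"
          then obtain v where v: "v \<in> \<sigma>" "x = insert v c" unfolding f_def by blast
          then obtain \<tau> where "\<tau> \<in> S" "v \<in> \<tau>" "v \<notin> c" unfolding \<sigma>_def by blast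
          then show "x \<in> S" using each[of \<tau>] v by auto
        qed
        show "S \<subseteq> f \<sigma>"
        proof
          fix \<tau> assume "\<tau> \<in> S"
          then obtain v where "v \<notin> c" "\<tau> = insert v c" using each by blast
          then show "\<tau> \<in> f \<sigma>" unfolding f_def \<sigma>_def using \<open>\<tau> \<in> S\<close> by blast
        qed
      qed
      then show ?thesis using sl by blast
    qed
  qed
  have "bij_betw f (link X c) (rep_complex_c X d k c)"
    by (rule bij_betw_imageI[OF inj]) (use into onto in blast)
  then show ?thesis unfolding complex_iso_def using mono by blast
qed

end
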